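(* Let $n\in\mathbb{N}$ and let $k=k(n)$ be a positive integer with $k(n)\to\infty$ as $n\to\infty$. Generate $n$ binary strings $\mathbf{s}_1,\dots,\mathbf{s}_n$, each of length $k$, independently and uniformly at random. For a fixed $i$ and each $j\neq i$, let $X_{ij}$ be the number of bits of $\mathbf{s}_j$ read when $\mathbf{s}_j$ is compared with $\mathbf{s}_i$ by reading bit-by-bit from left to right until the first position where $\mathbf{s}_j$ differs from $\mathbf{s}_i$ (inclusive of that position); if $\mathbf{s}_j=\mathbf{s}_i$ then all $k$ bits are read. Let $X_i=\sum_{j\neq i}X_{ij}$ and $X=\max_i X_i$. Then $X\lesssim 2n$, i.e. for all $\varepsilon_1,\varepsilon_2>0$ and all sufficiently large $n$, $\mathbb{P}\left(\frac{X}{2n}<1+\varepsilon_1\right)>1-\varepsilon_2$. *)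

theory Defs
  imports "HOL-Probability.Probability_Mass_Function"
begin

text \<open>A binary string of length k is a function from positions {..<k} to bool
  (extensional, i.e. undefined outside). A configuration of n strings is a
  function from indices {..<n} to strings.\<close>

definition bin_strings :: "nat \<Rightarrow> (nat \<Rightarrow> bool) set" where
  "bin_strings k = PiE {..<k} (\<lambda>_. UNIV)"

definition configs :: "nat \<Rightarrow> nat \<Rightarrow> (nat \<Rightarrow> nat \<Rightarrow> bool) set" where
  "configs n k = PiE {..<n} (\<lambda>_. bin_strings k)"

definition bits_read :: "nat \<Rightarrow> (nat \<Rightarrow> bool) \<Rightarrow> (nat \<Rightarrow> bool) \<Rightarrow> nat" where
  "bits_read k s t = (if \<forall>p<k. t p = s p then k else Suc (LEAST p. p < k \<and> t p \<noteq> s p))"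

definition X_i :: "nat \<Rightarrow> nat \<Rightarrow> (nat \<Rightarrow> nat \<Rightarrow> bool) \<Rightarrow> nat \<Rightarrow> nat" where
  "X_i n k S i = (\<Sum>j\<in>{..<n} - {i}. bits_read k (S i) (S j))"

definition X_max :: "nat \<Rightarrow> nat \<Rightarrow> (nat \<Rightarrow> nat \<Rightarrow> bool) \<Rightarrow> nat" where
  "X_max n k S = Max ((X_i n k S) ` {..<n})"

end

theory Submission
  imports Defs
begin

lemma bits_read_le: "bits_read k s t \<le> k"
proof (cases "\<forall>p<k. t p = s p")
  case False
  then obtain p where p: "p < k" "t p \<noteq> s p" by auto
  have "(LEAST p. p < k \<and> t p \<noteq> s p) < k"
    using LeastI[of "\<lambda>p. p < k \<and> t p \<noteq> s p" p] p by auto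
  then show ?thesis using False by (simp add: bits_read_def)
qed (simp add: bits_read_def)

lemma bits_read_less_iff:
  assumes "p < k"
  shows "p < bits_read k s t \<longleftrightarrow> (\<forall>q<p. t q = s q)"
proof (cases "\<forall>p<k. t p = s p")
  case True
  then show ?thesis using assms by (simp add: bits_read_def)
next
  case False
  then obtain p0 where p0: "p0 < k" "t p0 \<noteq> s p0" by auto
  define m where "m = (LEAST p. p < k \<and> t p \<noteq> s p)"
  have m: "m < k" "t m \<noteq> s m"
    using LeastI[of "\<lambda>p. p < k \<and> t p \<noteq> s p" p0] p0 unfolding m_def by auto
  have mm: "\<And>q. q < m \<Longrightarrow> t q = s q"
    using not_less_Least[of _ "\<lambda>p. p < k \<and> t p \<noteq> s p"] m(1) unfolding m_def
    by (metis less_trans)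
  have br: "bits_read k s t = Suc m" by (simp only: bits_read_def m_def if_not_P[OF False])
  show ?thesis
  proof
    assume "p < bits_read k s t" then show "\<forall>q<p. t q = s q" using br mm by auto
  next
    assume "\<forall>q<p. t q = s q" then show "p < bits_read k s t" using br m
      by (metis leI less_Suc_eq_le)
  qed
qed

lemma geo_id: "(a::real) ^ m = 1 + (a - 1) * (\<Sum>p<m. a ^ p)"
proof (induct m)
  case (Suc m)
  have "1 + (a - 1) * (\<Sum>p<Suc m. a ^ p) = (1 + (a - 1) * (\<Sum>p<m. a ^ p)) + (a - 1) * a ^ m"
    by (simp add: algebra_simps)
  also have "\<dots> = a ^ Suc m" using Suc by (simp add: algebra_simps)
  finally show ?case by simp
qed simp

lemma pow_bits_read:
  "(a::real) ^ bits_read k s t = 1 + (a - 1) * (\<Sum>p<k. if (\<forall>q<p. t q = s q) then a ^ p else 0)"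
proof -
  have "(\<Sum>p<k. if (\<forall>q<p. t q = s q) then a ^ p else 0) = (\<Sum>p\<in>{..<k} \<inter> {p. \<forall>q<p. t q = s q}. a ^ p)"
    by (simp add: sum.inter_restrict)
  also have "{..<k} \<inter> {p. \<forall>q<p. t q = s q} = {..<bits_read k s t}"
  proof (intro set_eqI iffI)
    fix x assume "x \<in> {..<k} \<inter> {p. \<forall>q<p. t q = s q}"
    then show "x \<in> {..<bits_read k s t}" using bits_read_less_iff[of x k s t] by auto
  next
    fix x assume x: "x \<in> {..<bits_read k s t}"
    then have "x < k" using bits_read_le[of k s t] by auto
    then show "x \<in> {..<k} \<inter> {p. \<forall>q<p. t q = s q}" using x bits_read_less_iff[of x k s t] by auto
  qed
  finally show ?thesis using geo_id[of a "bits_read k s t"] by simp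
qed

lemma card_prefix:
  assumes "p \<le> k"
  shows "card {t \<in> bin_strings k. \<forall>q<p. t q = s q} = 2 ^ (k - p)"
proof -
  have "{t \<in> bin_strings k. \<forall>q<p. t q = s q} = PiE {..<k} (\<lambda>q. if q < p then {s q} else UNIV)"
    using assms unfolding bin_strings_def by (auto simp: PiE_def Pi_def)
  then have "card {t \<in> bin_strings k. \<forall>q<p. t q = s q} = (\<Prod>q<k. card (if q < p then {s q} else (UNIV::bool set)))"
    by (simp add: card_PiE)
  also have "\<dots> = (\<Prod>q<k. if q < p then 1 else 2)"
    by (intro prod.cong) auto
  also have "\<dots> = (\<Prod>q\<in>{..<k} \<inter> - {q. q < p}. (2::nat))"
    by (simp add: prod.If_cases)
  also have "{..<k} \<inter> - {q. q < p} = {p..<k}" by auto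
  finally show ?thesis by simp
qed

lemma finite_bin_strings: "finite (bin_strings k)"
  unfolding bin_strings_def by (intro finite_PiE) auto

lemma card_bin_strings: "card (bin_strings k) = 2 ^ k"
  unfolding bin_strings_def by (simp add: card_PiE)

lemma sum_pow_bits_read:
  assumes a: "1 < a" "a < 2"
  shows "(\<Sum>t\<in>bin_strings k. (a::real) ^ bits_read k s t) \<le> 2 ^ k * (a / (2 - a))"
proof -
  let ?B = "bin_strings k"
  have fin: "finite ?B" by (rule finite_bin_strings)
  have inner: "(\<Sum>t\<in>?B. if (\<forall>q<p. t q = s q) then a ^ p else 0) = 2 ^ k * (a / 2) ^ p"
    if "p < k" for p
  proof -
    have "(\<Sum>t\<in>?B. if (\<forall>q<p. t q = s q) then a ^ p else 0) = (\<Sum>t\<in>{t\<in>?B. \<forall>q<p. t q = s q}. a ^ p)"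
      using fin by (simp add: sum.inter_filter[symmetric])
    also have "\<dots> = a ^ p * 2 ^ (k - p)"
      using card_prefix[of p k s] that by simp
    also have "\<dots> = 2 ^ k * (a / 2) ^ p"
      using that by (simp add: power_diff power_divide field_simps)
    finally show ?thesis .
  qed
  have "(\<Sum>t\<in>?B. a ^ bits_read k s t) = (\<Sum>t\<in>?B. 1 + (a - 1) * (\<Sum>p<k. if (\<forall>q<p. t q = s q) then a ^ p else 0))"
    by (simp only: pow_bits_read)
  also have "\<dots> = real (card ?B) + (a - 1) * (\<Sum>p<k. \<Sum>t\<in>?B. if (\<forall>q<p. t q = s q) then a ^ p else 0)"
    by (simp add: sum.distrib sum_distrib_left sum.swap[of _ ?B])
  also have "(\<Sum>p<k. \<Sum>t\<in>?B. if (\<forall>q<p. t q = s q) then a ^ p else 0) = (\<Sum>p<k. 2 ^ k * (a / 2) ^ p)"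
    by (intro sum.cong refl inner) auto
  also have "\<dots> = 2 ^ k * (\<Sum>p<k. (a / 2) ^ p)"
    by (simp add: sum_distrib_left)
  finally have eq: "(\<Sum>t\<in>?B. a ^ bits_read k s t) = 2 ^ k + (a - 1) * (2 ^ k * (\<Sum>p<k. (a / 2) ^ p))"
    by (simp add: card_bin_strings)
  have "(\<Sum>p<k. (a / 2) ^ p) < 1 / (1 - a / 2)"
    using a by (intro geometric_sum_less) auto
  then have "(a - 1) * (2 ^ k * (\<Sum>p<k. (a / 2) ^ p)) \<le> (a - 1) * (2 ^ k * (1 / (1 - a / 2)))"
    using a by (intro mult_left_mono) auto
  also have "2 ^ k + (a - 1) * (2 ^ k * (1 / (1 - a / 2))) = 2 ^ k * (a / (2 - a))"
    using a by (simp add: field_simps)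
  ultimately show ?thesis using eq by linarith
qed

lemma sum_configs:
  assumes i: "i < n" and a: "1 < a" "a < 2"
  shows "(\<Sum>S\<in>configs n k. (a::real) ^ X_i n k S i) \<le> 2 ^ k * (2 ^ k * (a / (2 - a))) ^ (n - 1)"
proof -
  let ?B = "bin_strings k"
  define A where "A = {..<n} - {i}"
  have iA: "i \<notin> A" and nA: "{..<n} = insert i A" and finA: "finite A" and cA: "card A = n - 1"
    using i by (auto simp: A_def)
  have conf: "configs n k = (\<lambda>(y, g). g(i := y)) ` (?B \<times> PiE A (\<lambda>_. ?B))"
    unfolding configs_def nA by (rule PiE_insert_eq)
  have inj: "inj_on (\<lambda>(y, g). g(i := y)) (?B \<times> PiE A (\<lambda>_. ?B))"
    using iA by (rule inj_combinator)
  have pw: "a ^ X_i n k S i = (\<Prod>j\<in>A. a ^ bits_read k (S i) (S j))" for S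
    unfolding X_i_def A_def by (simp add: power_sum)
  have "(\<Sum>S\<in>configs n k. a ^ X_i n k S i) =
      (\<Sum>(y, g)\<in>?B \<times> PiE A (\<lambda>_. ?B). \<Prod>j\<in>A. a ^ bits_read k y (g j))"
    unfolding conf pw using inj iA
    by (subst sum.reindex) (auto intro!: sum.cong prod.cong)
  also have "\<dots> = (\<Sum>y\<in>?B. \<Sum>g\<in>PiE A (\<lambda>_. ?B). \<Prod>j\<in>A. a ^ bits_read k y (g j))"
    by (rule sum.cartesian_product[symmetric])
  also have "\<dots> = (\<Sum>y\<in>?B. \<Prod>j\<in>A. \<Sum>t\<in>?B. a ^ bits_read k y t)"
    using finA finite_bin_strings
    by (intro sum.cong refl prod_sum_PiE[symmetric]) auto
  also have "\<dots> \<le> (\<Sum>y\<in>?B. \<Prod>j\<in>A. 2 ^ k * (a / (2 - a)))"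
    using a by (intro sum_mono prod_mono conjI sum_pow_bits_read sum_nonneg) auto
  also have "\<dots> = 2 ^ k * (2 ^ k * (a / (2 - a))) ^ (n - 1)"
    by (simp add: cA card_bin_strings)
  finally show ?thesis .
qed

lemma finite_configs: "finite (configs n k)"
  unfolding configs_def by (intro finite_PiE finite_bin_strings) auto

lemma card_configs: "card (configs n k) = (2 ^ k) ^ n"
  unfolding configs_def by (simp add: card_PiE card_bin_strings)

lemma card_tail:
  assumes i: "i < n" and a: "1 < a" "a < 2"
  shows "real (card {S\<in>configs n k. T \<le> real (X_i n k S i)}) * a powr T
           \<le> 2 ^ k * (2 ^ k * (a / (2 - a))) ^ (n - 1)"
proof -
  let ?E = "{S\<in>configs n k. T \<le> real (X_i n k S i)}"
  have "real (card ?E) * a powr T = (\<Sum>S\<in>?E. a powr T)" by simp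
  also have "\<dots> \<le> (\<Sum>S\<in>?E. a ^ X_i n k S i)"
  proof (intro sum_mono)
    fix S assume "S \<in> ?E"
    then have "a powr T \<le> a powr real (X_i n k S i)" using a by (intro powr_mono) auto
    also have "\<dots> = a ^ X_i n k S i" using a by (simp add: powr_realpow)
    finally show "a powr T \<le> a ^ X_i n k S i" .
  qed
  also have "\<dots> \<le> (\<Sum>S\<in>configs n k. a ^ X_i n k S i)"
    using a finite_configs by (intro sum_mono2) auto
  also have "\<dots> \<le> 2 ^ k * (2 ^ k * (a / (2 - a))) ^ (n - 1)"
    by (rule sum_configs[OF i a])
  finally show ?thesis .
qed

lemma prob_bad:
  assumes n: "n \<ge> 1" and a: "1 < a" "a < 2" and e: "\<epsilon> > 0"
  shows "measure_pmf.prob (pmf_of_set (configs n k))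
      {S. \<not> (real (X_max n k S) / (2 * real n) < 1 + \<epsilon>)}
     \<le> real n * ((a / (2 - a)) / a powr (2 + 2 * \<epsilon>)) ^ n"
proof -
  let ?C = "configs n k"
  let ?T = "real n * (2 + 2 * \<epsilon>)"
  let ?E = "\<lambda>i. {S\<in>?C. ?T \<le> real (X_i n k S i)}"
  define c where "c = a / (2 - a)"
  define q where "q = a powr (2 + 2 * \<epsilon>)"
  have c1: "c \<ge> 1" using a by (simp add: c_def field_simps)
  have q0: "q > 0" using a by (simp add: q_def)
  have Cne: "?C \<noteq> {}" using card_configs[of n k] finite_configs[of n k] by auto
  have sub: "?C \<inter> {S. \<not> (real (X_max n k S) / (2 * real n) < 1 + \<epsilon>)} \<subseteq> (\<Union>i\<in>{..<n}. ?E i)"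
  proof
    fix S assume S: "S \<in> ?C \<inter> {S. \<not> (real (X_max n k S) / (2 * real n) < 1 + \<epsilon>)}"
    have "X_max n k S \<in> (X_i n k S) ` {..<n}"
      unfolding X_max_def using n by (intro Max_in) (auto simp: lessThan_empty_iff)
    then obtain i where i: "i < n" "X_max n k S = X_i n k S i" by auto
    have "?T \<le> real (X_max n k S)"
      using S n by (auto simp: field_simps not_less)
    then show "S \<in> (\<Union>i\<in>{..<n}. ?E i)" using S i by auto
  qed
  have "measure_pmf.prob (pmf_of_set ?C) {S. \<not> (real (X_max n k S) / (2 * real n) < 1 + \<epsilon>)}
      = real (card (?C \<inter> {S. \<not> (real (X_max n k S) / (2 * real n) < 1 + \<epsilon>)})) / real (card ?C)"
    using Cne finite_configs by (simp add: measure_pmf_of_set)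
  also have "\<dots> \<le> real (\<Sum>i<n. card (?E i)) / real (card ?C)"
  proof (intro divide_right_mono)
    have "card (?C \<inter> {S. \<not> (real (X_max n k S) / (2 * real n) < 1 + \<epsilon>)}) \<le> card (\<Union>i\<in>{..<n}. ?E i)"
      using sub finite_configs by (intro card_mono) auto
    also have "\<dots> \<le> (\<Sum>i<n. card (?E i))" by (rule card_UN_le) auto
    finally show "real (card (?C \<inter> {S. \<not> (real (X_max n k S) / (2 * real n) < 1 + \<epsilon>)})) \<le> real (\<Sum>i<n. card (?E i))"
      by linarith
  qed auto
  also have "\<dots> = (\<Sum>i<n. real (card (?E i))) / real (card ?C)" by simp
  also have "\<dots> \<le> (\<Sum>i<n. (2 ^ k * (2 ^ k * c) ^ (n - 1)) / a powr ?T) / real (card ?C)"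
  proof (intro divide_right_mono sum_mono)
    fix i assume "i \<in> {..<n}"
    then have "real (card (?E i)) * a powr ?T \<le> 2 ^ k * (2 ^ k * c) ^ (n - 1)"
      using card_tail[where T="?T" and k=k and i=i and n=n and a=a] a by (simp add: c_def)
    then show "real (card (?E i)) \<le> (2 ^ k * (2 ^ k * c) ^ (n - 1)) / a powr ?T"
      using a by (simp add: field_simps)
  qed auto
  also have "a powr ?T = q ^ n"
    using a by (simp add: q_def powr_powr powr_realpow[symmetric] mult.commute)
  also have "(\<Sum>i<n. (2 ^ k * (2 ^ k * c) ^ (n - 1)) / q ^ n) / real (card ?C)
      = real n * c ^ (n - 1) / q ^ n"
  proof -
    have "(2 ^ k) ^ n = (2::real) ^ k * (2 ^ k) ^ (n - 1)"
      using n by (metis Suc_diff_1 less_le_trans zero_less_one power_Suc)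
    then show ?thesis
      by (simp add: card_configs power_mult_distrib field_simps)
  qed
  also have "\<dots> \<le> real n * c ^ n / q ^ n"
    using c1 q0 by (intro divide_right_mono mult_left_mono power_increasing) auto
  also have "\<dots> = real n * (c / q) ^ n" by (simp add: power_divide)
  finally show ?thesis by (simp add: c_def q_def)
qed

lemma exists_a:
  assumes e: "(\<epsilon>::real) > 0"
  shows "\<exists>a. 1 < a \<and> a < 2 \<and> a / (2 - a) < a powr (2 + 2 * \<epsilon>)"
proof -
  define f where "f = (\<lambda>x::real. x powr (2 + 2 * \<epsilon>) * (2 - x) - x)"
  have "DERIV f 1 :> 2 * \<epsilon>"
    unfolding f_def
    by (rule derivative_eq_intros refl | simp)+
  then obtain d where d: "d > 0" "\<forall>h>0. h < d \<longrightarrow> f 1 < f (1 + h)"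
    using DERIV_pos_inc_right e by (metis mult_pos_pos zero_less_numeral)
  define h where "h = min (d / 2) (1 / 2)"
  have h: "h > 0" "h < d" "h < 1" using d by (auto simp: h_def)
  have "f 1 < f (1 + h)" using d h by auto
  then have "1 + h < (1 + h) powr (2 + 2 * \<epsilon>) * (1 - h)" by (simp add: f_def)
  then have "(1 + h) / (2 - (1 + h)) < (1 + h) powr (2 + 2 * \<epsilon>)"
    using h by (simp add: field_simps)
  then show ?thesis using h by (intro exI[of _ "1 + h"]) auto
qed

theorem lemma2p2:
  fixes k :: "nat \<Rightarrow> nat" and \<epsilon>1 \<epsilon>2 :: real
  assumes "\<And>n. k n > 0"
    and "filterlim k at_top at_top"
    and "\<epsilon>1 > 0" and "\<epsilon>2 > 0"
  shows "\<forall>\<^sub>F n in at_top.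
    measure_pmf.prob (pmf_of_set (configs n (k n)))
      {S. real (X_max n (k n) S) / (2 * real n) < 1 + \<epsilon>1} > 1 - \<epsilon>2"
proof -
  obtain a where a: "1 < a" "a < 2" "a / (2 - a) < a powr (2 + 2 * \<epsilon>1)"
    using exists_a[OF assms(3)] by blast
  define r where "r = (a / (2 - a)) / a powr (2 + 2 * \<epsilon>1)"
  have p0: "0 < a powr (2 + 2 * \<epsilon>1)" using a by simp
  have r: "0 < r" "r < 1" using a p0 by (auto simp: r_def divide_less_eq mult.commute)
  have "(\<lambda>n. of_nat n * r ^ n) \<longlonglongrightarrow> 0"
    by (rule powser_times_n_limit_0) (use r in simp)
  then have ev1: "\<forall>\<^sub>F n in at_top. real n * r ^ n < \<epsilon>2"
    using assms(4) by (auto dest: order_tendstoD(2))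
  have ev2: "\<forall>\<^sub>F n in at_top. (n::nat) \<ge> 1" by (rule eventually_ge_at_top)
  show ?thesis
    using ev1 ev2
  proof eventually_elim
    case (elim n)
    let ?M = "pmf_of_set (configs n (k n))"
    let ?G = "{S. real (X_max n (k n) S) / (2 * real n) < 1 + \<epsilon>1}"
    have bad: "measure_pmf.prob ?M (UNIV - ?G) \<le> real n * r ^ n"
    proof -
      have "UNIV - ?G = {S. \<not> (real (X_max n (k n) S) / (2 * real n) < 1 + \<epsilon>1)}" by auto
      then show ?thesis using prob_bad[OF elim(2) a(1,2) assms(3), of "k n"] by (simp add: r_def)
    qed
    have "measure_pmf.prob ?M (UNIV - ?G) = 1 - measure_pmf.prob ?M ?G"
      using measure_pmf.prob_compl[of ?G ?M] by simp
    then show ?case using bad elim(1) by linarith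
  qed
qed

end
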